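(* Let $n$ be an integer, $g(m)=10^{m/5}$, and for real $x$ with $2\le x\le n-2$ let $p(x)=(x-1)g(n-1-x)+g(n-2-x)$. Then $p$ is decreasing on $[3,n-2]$, and \[ p(3)=\max\{p(x): x\in\mathbb{Z}^+,\ 2\le x\le n-2\}. \] *)

theory Defs
  imports Complex_Main
begin

definition g :: "real \<Rightarrow> real" where
  "g m = 10 powr (m / 5)"

definition p :: "int \<Rightarrow> real \<Rightarrow> real" where
  "p n x = (x - 1) * g (real_of_int n - 1 - x) + g (real_of_int n - 2 - x)"

end

theory Submission
  imports Defs
begin

lemma ln10_gt2: "2 < ln (10::real)"
proof -
  have "exp (2::real) = exp 1 * exp 1" by (simp flip: exp_add)
  also have "\<dots> \<le> 3 * 3" using exp_le by (intro mult_mono) auto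
  finally have "exp (2::real) < 10" by simp
  then show ?thesis by (metis exp_less_cancel_iff exp_ln zero_less_numeral)
qed

lemma c_facts: "1 < 10 powr (1/5::real)" "10 powr (1/5::real) < 2"
  "(10 powr (1/5::real))^2 < 10 powr (1/5) + 1"
proof -
  define c :: real where "c = 10 powr (1/5)"
  have c5: "c^5 = 10" unfolding c_def by (simp add: powr_realpow [symmetric] powr_powr)
  have c0: "c > 0" unfolding c_def by simp
  show c1: "1 < 10 powr (1/5::real)" by simp
  hence c1': "1 < c" by (simp add: c_def)
  show "10 powr (1/5::real) < 2"
  proof (rule ccontr)
    assume "\<not> ?thesis" hence "2 \<le> c" by (simp add: c_def)
    hence "2^5 \<le> c^5" by (intro power_mono) auto
    thus False using c5 by simp
  qed
  show "(10 powr (1/5::real))^2 < 10 powr (1/5) + 1"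
  proof (rule ccontr)
    assume "\<not> ?thesis" hence h: "c^2 \<ge> c + 1" by (simp add: c_def)
    have c16: "c \<ge> 1.6"
    proof (rule ccontr)
      assume "\<not> c \<ge> 1.6" hence "c < 1.6" by simp
      hence "c * c < 1.6 * c" using c0 by (intro mult_strict_right_mono) auto
      moreover have "c + 1 \<le> c * c" using h by (simp add: power2_eq_square)
      ultimately show False using \<open>c < 1.6\<close> by linarith
    qed
    have "c * c^2 \<ge> c * (c+1)" using h c0 by (intro mult_left_mono) auto
    hence h3: "c^3 \<ge> 2*c+1" using h by (simp add: power2_eq_square power3_eq_cube algebra_simps)
    have "c * c^3 \<ge> c * (2*c+1)" using h3 c0 by (intro mult_left_mono) auto
    hence h4: "c^4 \<ge> 3*c+2" using h by (simp add: power2_eq_square power3_eq_cube eval_nat_numeral algebra_simps)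
    have "c * c^4 \<ge> c * (3*c+2)" using h4 c0 by (intro mult_left_mono) auto
    hence "c^5 \<ge> 5*c+3" using h by (simp add: power2_eq_square power3_eq_cube eval_nat_numeral algebra_simps)
    thus False using c5 c16 by simp
  qed
qed


lemma p_form: "p n x = 10 powr ((real_of_int n - 1 - x)/5) * (x - 1 + 1 / 10 powr (1/5))"
proof -
  have e: "(real_of_int n - 2 - x)/5 = (real_of_int n - 1 - x)/5 - 1/5" by (simp add: field_simps)
  have "g (real_of_int n - 2 - x) = 10 powr ((real_of_int n - 1 - x)/5 - 1/5)"
    unfolding g_def by (subst e) (rule refl)
  also have "\<dots> = 10 powr ((real_of_int n - 1 - x)/5) / 10 powr (1/5)" by (rule powr_diff)
  finally show ?thesis unfolding p_def g_def by (simp add: algebra_simps)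
qed

lemma powr_lin: "(d::real) \<ge> 0 \<Longrightarrow> 1 + d * ln 10 / 5 \<le> 10 powr (d/5)"
  using exp_ge_add_one_self[of "d/5 * ln 10"] by (simp add: powr_def)

lemma mono_p:
  assumes "3 \<le> x" "x < y"
  shows "p n y < p n x"
proof -
  define c :: real where "c = 10 powr (1/5)"
  define d where "d = y - x"
  define A where "A = 10 powr ((real_of_int n - 1 - y)/5)"
  have A0: "A > 0" unfolding A_def by simp
  have d0: "d > 0" using assms d_def by simp
  have e: "(real_of_int n - 1 - x)/5 = (real_of_int n - 1 - y)/5 + d/5" unfolding d_def by (simp add: field_simps)
  have B: "10 powr ((real_of_int n - 1 - x)/5) = A * 10 powr (d/5)"
    unfolding A_def by (subst e) (rule powr_add)
  have c2: "c < 2" "c > 1" using c_facts c_def by auto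
  have ic: "1/c > 1/2" "1/c > 0" using c2 by (auto simp: field_simps)
  have L: "ln 10 > (2::real)" by (rule ln10_gt2)
  have E: "1 + d * ln 10 / 5 \<le> 10 powr (d/5)" using d0 by (intro powr_lin) simp
  have key: "y - 1 + 1/c < (1 + d * ln 10 / 5) * (x - 1 + 1/c)"
  proof -
    have xx: "x - 1 + 1/c > 5/2" using ic assms by linarith
    have "d * ln 10 / 5 > d * (2/5)" using d0 L by simp
    hence "d * ln 10 / 5 * (x - 1 + 1/c) > d * (2/5) * (5/2)"
      using d0 xx by (intro mult_strict_mono) auto
    moreover have "(1 + d*ln 10/5)*(x-1+1/c) = (x-1+1/c) + d*ln 10/5*(x-1+1/c)" by (simp add: distrib_right)
    moreover have "y-1+1/c = (x-1+1/c)+d" by (simp add: d_def)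
    ultimately show ?thesis by linarith
  qed
  also have "\<dots> \<le> 10 powr (d/5) * (x - 1 + 1/c)"
    using E assms ic by (intro mult_right_mono) auto
  finally have "A * (y - 1 + 1/c) < A * (10 powr (d/5) * (x - 1 + 1/c))"
    using A0 by simp
  thus ?thesis unfolding p_form[of n x] p_form[of n y] B A_def c_def by (simp add: mult_ac)
qed

lemma p23: "p n 2 < p n 3"
proof -
  define c :: real where "c = 10 powr (1/5)"
  define A where "A = 10 powr ((real_of_int n - 1 - 3)/5)"
  have A0: "A > 0" unfolding A_def by simp
  have B: "10 powr ((real_of_int n - 1 - 2)/5) = A * c"
    unfolding A_def c_def by (simp add: powr_add[symmetric] field_simps)
  have c: "c^2 < c + 1" "c > 1" using c_facts c_def by auto
  have "c * (2 - 1 + 1/c) < 3 - 1 + 1/c"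
  proof -
    have "c*c < c + 1" using c by (simp add: power2_eq_square)
    hence "c*c/c < (c+1)/c" using c by (intro divide_strict_right_mono) auto
    hence "c < 1 + 1/c" using c by (simp add: add_divide_distrib)
    moreover have "c * (2 - 1 + 1/c) = c + 1" using c by (simp add: field_simps)
    ultimately show ?thesis by linarith
  qed
  hence "A * (c * (2 - 1 + 1/c)) < A * (3 - 1 + 1/c)" using A0 by simp
  moreover have "p n 3 = A * (3 - 1 + 1/c)" using p_form[of n 3] unfolding A_def c_def by simp
  moreover have "p n 2 = A * (c * (2 - 1 + 1/c))" using p_form[of n 2] unfolding B c_def by simp
  ultimately show ?thesis by simp
qed

theorem lemma2p9:
  fixes n :: int
  assumes "n \<ge> 5"
  shows "(\<forall>x y. 3 \<le> x \<and> x < y \<and> y \<le> real_of_int n - 2 \<longrightarrow> p n y < p n x)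
         \<and> p n 3 = Max ((\<lambda>x. p n (real_of_int x)) ` {x::int. 0 < x \<and> 2 \<le> x \<and> x \<le> n - 2})"
proof
  show "\<forall>x y. 3 \<le> x \<and> x < y \<and> y \<le> real_of_int n - 2 \<longrightarrow> p n y < p n x"
    using mono_p by blast
  define S where "S = {x::int. 0 < x \<and> 2 \<le> x \<and> x \<le> n - 2}"
  have fin: "finite S" unfolding S_def by (rule finite_subset[of _ "{2..n-2}"]) auto
  have m: "p n (real_of_int x) \<le> p n 3" if "x \<in> S" for x
  proof -
    have "x = 2 \<or> x = 3 \<or> x > 3" using that S_def by auto
    thus ?thesis
    proof (elim disjE)
      assume "x = 2" thus ?thesis using p23[of n] by simp
    next
      assume "x > 3" hence "real_of_int x > 3" by simp
      thus ?thesis using mono_p[of 3 "real_of_int x" n] by simp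
    qed simp
  qed
  have "3 \<in> S" using assms S_def by auto
  show "p n 3 = Max ((\<lambda>x. p n (real_of_int x)) ` S)"
    by (rule Max_eqI[symmetric]) (use fin m \<open>3 \<in> S\<close> in \<open>auto intro: image_eqI[where x=3]\<close>)
qed

end
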